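(* Let $P$ be a pair of pants with $\pi_1(P)=\langle \mathcal A,\mathcal B,\mathcal C\mid \mathcal C\mathcal B\mathcal A=1\rangle$ (generators corresponding to the boundary components). Then $\mathrm{rep}(\pi_1(P),\mathrm{SO}(3))$ contains a dense open subset consisting of triangular characters. Moreover, from any character one can find a path to triangular characters such that every point of the path except its starting point is triangular.
   Context: $\mathrm{rep}(\pi_1(P),\mathrm{SO}(3))=\mathrm{Hom}(\pi_1(P),\mathrm{SO}(3))/\mathrm{SO}(3)$ (conjugation quotient). For $x\in\mathbb S^2$ and $\theta$, $R_{x,\theta}\in\mathrm{SO}(3)$ denotes the rotation fixing $x$ by angle $\theta$ counterclockwise as seen from $x$. A representation $h:\pi_1(P)\to\mathrm{SO}(3)$ is triangular if there is a nondegenerate spherical triangle (bounded by three geodesic arcs of length $<\pi$, vertices not on a common great circle) with vertices $w_0,w_1,w_2$ in clockwise order and angles $\theta_0,\theta_1,\theta_2$ such that $h(\mathcal A)=R_{w_0,2\theta_0}$, $h(\mathcal B)=R_{w_1,2\theta_1}$, $h(\mathcal C)=R_{w_2,2\theta_2}$ (equivalently, $h$ is the holonomy of the spherical structure on $P$ obtained by gluing two copies of the triangle along corresponding edges). A character is triangular if it is the class of a triangular representation. *)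

theory Defs
  imports "HOL-Analysis.Analysis"
begin

definition quotient_topology :: "'a topology \<Rightarrow> ('a \<Rightarrow> 'b) \<Rightarrow> 'b topology" where
  "quotient_topology X q =
     topology (\<lambda>U. U \<subseteq> q ` topspace X \<and> openin X {x \<in> topspace X. q x \<in> U})"

lemma istopology_quotient_topology:
  "istopology (\<lambda>U. U \<subseteq> q ` topspace X \<and> openin X {x \<in> topspace X. q x \<in> U})"
proof -
  have i: "{x \<in> topspace X. q x \<in> S \<inter> T} = {x \<in> topspace X. q x \<in> S} \<inter> {x \<in> topspace X. q x \<in> T}"
    for S T by blast
  have u: "{x \<in> topspace X. q x \<in> \<Union>K} = (\<Union>S\<in>K. {x \<in> topspace X. q x \<in> S})" for K by blast
  show ?thesis unfolding istopology_def
  proof (rule conjI; intro allI impI)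
    fix S T assume "S \<subseteq> q ` topspace X \<and> openin X {x \<in> topspace X. q x \<in> S}"
      "T \<subseteq> q ` topspace X \<and> openin X {x \<in> topspace X. q x \<in> T}"
    then show "S \<inter> T \<subseteq> q ` topspace X \<and> openin X {x \<in> topspace X. q x \<in> S \<inter> T}"
      by (metis (no_types, lifting) i le_infI1 openin_Int)
  next
    fix K assume "\<forall>S\<in>K. S \<subseteq> q ` topspace X \<and> openin X {x \<in> topspace X. q x \<in> S}"
    then show "\<Union>K \<subseteq> q ` topspace X \<and> openin X {x \<in> topspace X. q x \<in> \<Union>K}"
      by (auto simp only: u intro!: openin_Union)
  qed
qed

lemma openin_quotient_topology:
  "openin (quotient_topology X q) U \<longleftrightarrow>
     U \<subseteq> q ` topspace X \<and> openin X {x \<in> topspace X. q x \<in> U}"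
  unfolding quotient_topology_def
  by (simp only: topology_inverse'[OF istopology_quotient_topology])

type_synonym mat3 = "real^3^3"

definition SO3 :: "mat3 set" where
  "SO3 = {M. orthogonal_matrix M \<and> det M = 1}"

text \<open>R x theta: rotation fixing the unit vector x by angle theta, counterclockwise
  as seen from x (right-hand rule; Rodrigues' formula).\<close>
definition rot :: "real^3 \<Rightarrow> real \<Rightarrow> mat3" where
  "rot x \<theta> = matrix (\<lambda>v. cos \<theta> *\<^sub>R v + sin \<theta> *\<^sub>R (cross3 x v) + ((1 - cos \<theta>) * (x \<bullet> v)) *\<^sub>R x)"

text \<open>Interior angle at vertex a of the spherical triangle with vertices a, b, c:
  the angle between the tangent vectors at a of the geodesic arcs from a to b and from a to c.\<close>
definition sph_angle :: "real^3 \<Rightarrow> real^3 \<Rightarrow> real^3 \<Rightarrow> real" where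
  "sph_angle a b c =
     (let t1 = b - (a \<bullet> b) *\<^sub>R a; t2 = c - (a \<bullet> c) *\<^sub>R a
      in arccos ((t1 \<bullet> t2) / (norm t1 * norm t2)))"

text \<open>Nondegenerate spherical triangle: vertices on the unit sphere, not on a common
  great circle (i.e. linearly independent; then the sides are geodesic arcs of length
  less than pi).  Vertices in clockwise order as seen from outside the sphere means
  negative orientation: w0 . (w1 x w2) < 0.\<close>
definition cw_sph_triangle :: "real^3 \<Rightarrow> real^3 \<Rightarrow> real^3 \<Rightarrow> bool" where
  "cw_sph_triangle w0 w1 w2 \<longleftrightarrow>
     norm w0 = 1 \<and> norm w1 = 1 \<and> norm w2 = 1 \<and>
     w0 \<bullet> cross3 w1 w2 \<noteq> 0 \<and>
     w0 \<bullet> cross3 w1 w2 < 0"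

text \<open>pi_1(P) = < A, B, C | C B A = 1 >.  A homomorphism pi_1(P) \<rightarrow> SO(3) is the triple
  (h(A), h(B), h(C)) of elements of SO(3) satisfying h(C) h(B) h(A) = 1.\<close>
definition Hom_P :: "(mat3 \<times> mat3 \<times> mat3) set" where
  "Hom_P = {(a, b, c). a \<in> SO3 \<and> b \<in> SO3 \<and> c \<in> SO3 \<and> c ** b ** a = mat 1}"

definition conj_rep :: "mat3 \<Rightarrow> mat3 \<times> mat3 \<times> mat3 \<Rightarrow> mat3 \<times> mat3 \<times> mat3" where
  "conj_rep g h = (case h of (a, b, c) \<Rightarrow>
     (g ** a ** matrix_inv g, g ** b ** matrix_inv g, g ** c ** matrix_inv g))"

definition character :: "mat3 \<times> mat3 \<times> mat3 \<Rightarrow> (mat3 \<times> mat3 \<times> mat3) set" where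
  "character h = {conj_rep g h | g. g \<in> SO3}"

definition Hom_top :: "(mat3 \<times> mat3 \<times> mat3) topology" where
  "Hom_top = subtopology euclidean Hom_P"

definition rep_top :: "(mat3 \<times> mat3 \<times> mat3) set topology" where
  "rep_top = quotient_topology Hom_top character"

definition triangular_rep :: "mat3 \<times> mat3 \<times> mat3 \<Rightarrow> bool" where
  "triangular_rep h \<longleftrightarrow> h \<in> Hom_P \<and>
     (\<exists>w0 w1 w2. cw_sph_triangle w0 w1 w2 \<and>
        h = (rot w0 (2 * sph_angle w0 w1 w2),
             rot w1 (2 * sph_angle w1 w2 w0),
             rot w2 (2 * sph_angle w2 w0 w1)))"

definition triangular_char :: "(mat3 \<times> mat3 \<times> mat3) set \<Rightarrow> bool" where
  "triangular_char c \<longleftrightarrow> (\<exists>h. triangular_rep h \<and> c = character h)"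

end

theory Submission
  imports Defs
begin


lemma inner3: "x \<bullet> (y::real^3) = x$1*y$1 + x$2*y$2 + x$3*y$3"
  by (simp add: inner_vec_def sum_3)

lemmas cc = cross_components

definition refl3 :: "real^3 \<Rightarrow> real^3 \<Rightarrow> real^3" where
  "refl3 n v = v - (2 * (n \<bullet> v) / (n \<bullet> n)) *\<^sub>R n"

lemma RLpoly:
  fixes m n w v :: "real^3"
  assumes "m \<bullet> w = 0" "n \<bullet> w = 0" "w \<bullet> w = 1"
  shows "((m\<bullet>m)*(n\<bullet>n)) *\<^sub>R v - (2*(n\<bullet>v)*(m\<bullet>m)) *\<^sub>R n - (2*(m\<bullet>v)*(n\<bullet>n)) *\<^sub>R m + (4*(n\<bullet>v)*(m\<bullet>n)) *\<^sub>R m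
    = ((m\<bullet>n)^2 - (cross3 m n \<bullet> w)^2) *\<^sub>R v + (-2*(m\<bullet>n)*(cross3 m n \<bullet> w)) *\<^sub>R cross3 w v
      + (((m\<bullet>m)*(n\<bullet>n) - (m\<bullet>n)^2 + (cross3 m n \<bullet> w)^2)*(w\<bullet>v)) *\<^sub>R w"
  using assms unfolding vec_eq_iff forall_3
  apply (simp only: vector_add_component vector_minus_component vector_scaleR_component cc inner3 real_scaleR_def)
  apply (intro conjI)
  by algebra+



definition rotf :: "real^3 \<Rightarrow> real \<Rightarrow> real^3 \<Rightarrow> real^3" where
  "rotf x \<theta> v = cos \<theta> *\<^sub>R v + sin \<theta> *\<^sub>R (cross3 x v) + ((1 - cos \<theta>) * (x \<bullet> v)) *\<^sub>R x"

lemma linear_rotf: "linear (rotf x \<theta>)"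
  unfolding rotf_def
  by (auto simp: linear_iff cross_add_right cross_mult_right inner_add_right algebra_simps)

lemma rot_apply: "rot x \<theta> *v v = rotf x \<theta> v"
proof -
  have "rot x \<theta> = matrix (rotf x \<theta>)" unfolding rot_def rotf_def by simp
  then show ?thesis using matrix_vector_mul(2)[OF linear_rotf] by metis
qed

lemma linear_refl3: "linear (refl3 n)"
  unfolding refl3_def
  by (auto simp: linear_iff inner_add_right algebra_simps add_divide_distrib)

definition sig :: "real^3 \<Rightarrow> mat3" where "sig n = matrix (refl3 n)"

lemma sig_apply: "sig n *v v = refl3 n v"
  using matrix_vector_mul(2)[OF linear_refl3] unfolding sig_def by metis

lemma triple_cyc: "(x::real^3) \<bullet> cross3 y z = y \<bullet> cross3 z x"
  by (simp add: inner3 cc algebra_simps)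
lemma triple_swap: "(x::real^3) \<bullet> cross3 y z = cross3 x y \<bullet> z"
  by (simp add: inner3 cc algebra_simps)

lemma refl_expand:
  assumes "m \<noteq> 0" "n \<noteq> 0"
  shows "((m\<bullet>m)*(n\<bullet>n)) *\<^sub>R refl3 m (refl3 n v) =
    ((m\<bullet>m)*(n\<bullet>n)) *\<^sub>R v - (2*(n\<bullet>v)*(m\<bullet>m)) *\<^sub>R n - (2*(m\<bullet>v)*(n\<bullet>n)) *\<^sub>R m + (4*(n\<bullet>v)*(m\<bullet>n)) *\<^sub>R m"
proof -
  have m: "m \<bullet> m \<noteq> 0" and n: "n \<bullet> n \<noteq> 0" using assms by auto
  define r where "r = refl3 n v"
  have r: "r = v - (2 * (n \<bullet> v) / (n \<bullet> n)) *\<^sub>R n" unfolding r_def refl3_def ..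
  have mr: "m \<bullet> r = m \<bullet> v - 2 * (n \<bullet> v) / (n \<bullet> n) * (m \<bullet> n)"
    unfolding r by (simp add: inner_diff_right)
  have e1: "((m\<bullet>m)*(n\<bullet>n)) * (2 * (m \<bullet> r) / (m \<bullet> m)) = 2*(m\<bullet>v)*(n\<bullet>n) - 4*(n\<bullet>v)*(m\<bullet>n)"
    unfolding mr using m n by (simp add: field_simps)
  have e2: "((m\<bullet>m)*(n\<bullet>n)) *\<^sub>R r = ((m\<bullet>m)*(n\<bullet>n)) *\<^sub>R v - (2*(n\<bullet>v)*(m\<bullet>m)) *\<^sub>R n"
    unfolding r using n by (simp add: scaleR_diff_right)
  have "((m\<bullet>m)*(n\<bullet>n)) *\<^sub>R refl3 m r = ((m\<bullet>m)*(n\<bullet>n)) *\<^sub>R r - (((m\<bullet>m)*(n\<bullet>n)) * (2 * (m \<bullet> r) / (m \<bullet> m))) *\<^sub>R m"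
    unfolding refl3_def by (simp add: scaleR_diff_right)
  also have "\<dots> = ((m\<bullet>m)*(n\<bullet>n)) *\<^sub>R v - (2*(n\<bullet>v)*(m\<bullet>m)) *\<^sub>R n - (2*(m\<bullet>v)*(n\<bullet>n)) *\<^sub>R m + (4*(n\<bullet>v)*(m\<bullet>n)) *\<^sub>R m"
    unfolding e1 e2 by (simp add: algebra_simps)
  finally show ?thesis unfolding r_def .
qed

lemma RLcore:
  fixes m n w v :: "real^3"
  assumes "m \<bullet> w = 0" "n \<bullet> w = 0" "w \<bullet> w = 1" "m \<noteq> 0" "n \<noteq> 0"
  shows "((m\<bullet>m)*(n\<bullet>n)) *\<^sub>R refl3 m (refl3 n v)
    = ((m\<bullet>n)^2 - (cross3 m n \<bullet> w)^2) *\<^sub>R v + (-2*(m\<bullet>n)*(cross3 m n \<bullet> w)) *\<^sub>R cross3 w v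
      + (((m\<bullet>m)*(n\<bullet>n) - (m\<bullet>n)^2 + (cross3 m n \<bullet> w)^2)*(w\<bullet>v)) *\<^sub>R w"
  using refl_expand[OF assms(4,5)] RLpoly[OF assms(1-3)] by simp

lemma refl_pair_rot:
  fixes m n w :: "real^3"
  assumes "m \<bullet> w = 0" "n \<bullet> w = 0" "w \<bullet> w = 1" "m \<noteq> 0" "n \<noteq> 0"
    and c: "cos \<phi> * ((m\<bullet>m)*(n\<bullet>n)) = (m\<bullet>n)^2 - (cross3 m n \<bullet> w)^2"
    and s: "sin \<phi> * ((m\<bullet>m)*(n\<bullet>n)) = -2*(m\<bullet>n)*(cross3 m n \<bullet> w)"
  shows "sig m ** sig n = rot w \<phi>"
proof -
  let ?P = "(m\<bullet>m)*(n\<bullet>n)"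
  have P: "?P \<noteq> 0" using assms(4,5) by simp
  have c2: "(1 - cos \<phi>) * ?P = ?P - (m\<bullet>n)^2 + (cross3 m n \<bullet> w)^2" using c by (simp add: algebra_simps)
  show ?thesis
  proof (subst matrix_eq, intro allI)
    fix v
    have "?P *\<^sub>R (rot w \<phi> *v v) = (cos \<phi> * ?P) *\<^sub>R v + (sin \<phi> * ?P) *\<^sub>R cross3 w v + ((1 - cos \<phi>) * ?P * (w \<bullet> v)) *\<^sub>R w"
      unfolding rot_apply rotf_def by (simp add: scaleR_add_right algebra_simps)
    also have "\<dots> = ?P *\<^sub>R refl3 m (refl3 n v)"
      unfolding RLcore[OF assms(1-5)] c s c2 ..
    finally have "?P *\<^sub>R ((sig m ** sig n) *v v) = ?P *\<^sub>R (rot w \<phi> *v v)"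
      by (auto simp: matrix_vector_mul_assoc[symmetric] sig_apply)
    then show "(sig m ** sig n) *v v = rot w \<phi> *v v" using P by simp
  qed
qed




lemma perp_cross_sq:
  fixes m n w :: "real^3"
  assumes "m \<bullet> w = 0" "n \<bullet> w = 0" "w \<bullet> w = 1"
  shows "(cross3 m n \<bullet> w)^2 + (m \<bullet> n)^2 = (m\<bullet>m)*(n\<bullet>n)"
  using assms unfolding inner3 cc power2_eq_square by algebra

lemma S_eq:
  fixes w0 w1 w2 :: "real^3"
  assumes "w0 \<bullet> w0 = 1"
  shows "cross3 (cross3 w0 w1) (cross3 w2 w0) \<bullet> w0 = - (w0 \<bullet> cross3 w1 w2)"
  using assms unfolding inner3 cc by algebra

lemma unit_inner: "norm (w::real^3) = 1 \<Longrightarrow> w \<bullet> w = 1"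
  by (simp add: dot_square_norm)

lemma vertex:
  assumes T: "cw_sph_triangle w0 w1 w2"
  shows "rot w0 (2 * sph_angle w0 w1 w2) = sig (cross3 w0 w1) ** sig (cross3 w2 w0)"
proof -
  define m where "m = cross3 w0 w1"
  define n where "n = cross3 w2 w0"
  define D where "D = w0 \<bullet> cross3 w1 w2"
  define C where "C = m \<bullet> n"
  define S where "S = cross3 m n \<bullet> w0"
  define Q where "Q = norm m * norm n"
  have u0: "w0 \<bullet> w0 = 1" and u1: "w1 \<bullet> w1 = 1" and u2: "w2 \<bullet> w2 = 1" and D0: "D < 0"
    using T unfolding cw_sph_triangle_def D_def by (auto intro: unit_inner)
  have mw: "m \<bullet> w0 = 0" unfolding m_def by (simp add: inner3 cc algebra_simps)
  have nw: "n \<bullet> w0 = 0" unfolding n_def by (simp add: inner3 cc algebra_simps)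
  have "m \<bullet> w2 = D" unfolding m_def D_def by (simp add: inner3 cc algebra_simps)
  then have m0: "m \<noteq> 0" using D0 by auto
  have "n \<bullet> w1 = D" unfolding n_def D_def by (simp add: inner3 cc algebra_simps)
  then have n0: "n \<noteq> 0" using D0 by auto
  have SD: "S = - D" unfolding S_def m_def n_def D_def using S_eq[OF u0] .
  have S0: "S > 0" using SD D0 by simp
  have Q0: "Q > 0" unfolding Q_def using m0 n0 by simp
  have QP: "Q^2 = (m\<bullet>m)*(n\<bullet>n)" unfolding Q_def by (simp add: power_mult_distrib dot_square_norm)
  have CS: "S^2 + C^2 = Q^2" unfolding QP S_def C_def using perp_cross_sq[OF mw nw u0] .
  define t1 where "t1 = w1 - (w0 \<bullet> w1) *\<^sub>R w0"
  define t2 where "t2 = w2 - (w0 \<bullet> w2) *\<^sub>R w0"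
  have "m \<bullet> n = (w0 \<bullet> w2) * (w1 \<bullet> w0) - (w0 \<bullet> w0) * (w1 \<bullet> w2)"
    unfolding m_def n_def by (rule dot_cross)
  then have tt: "t1 \<bullet> t2 = - C" unfolding t1_def t2_def C_def
    by (simp add: inner_diff_left inner_diff_right u0 inner_commute algebra_simps)
  have "m \<bullet> m = (w0 \<bullet> w0) * (w1 \<bullet> w1) - (w0 \<bullet> w1) * (w1 \<bullet> w0)"
    unfolding m_def by (rule dot_cross)
  then have "t1 \<bullet> t1 = m \<bullet> m" unfolding t1_def
    by (simp add: inner_diff_left inner_diff_right u0 u1 inner_commute algebra_simps)
  then have nt1: "norm t1 = norm m" by (simp add: norm_eq_sqrt_inner)
  have "n \<bullet> n = (w2 \<bullet> w2) * (w0 \<bullet> w0) - (w2 \<bullet> w0) * (w0 \<bullet> w2)"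
    unfolding n_def by (rule dot_cross)
  then have "t2 \<bullet> t2 = n \<bullet> n" unfolding t2_def
    by (simp add: inner_diff_left inner_diff_right u0 u2 inner_commute algebra_simps)
  then have nt2: "norm t2 = norm n" by (simp add: norm_eq_sqrt_inner)
  define y where "y = - C / Q"
  have ang: "sph_angle w0 w1 w2 = arccos y"
    unfolding sph_angle_def Let_def y_def Q_def using tt nt1 nt2 t1_def t2_def by simp
  have y2: "1 - y^2 = (S/Q)^2" unfolding y_def using Q0 CS by (simp add: field_simps power_divide)
  then have "y^2 \<le> 1" by (smt (verit) zero_le_power2)
  then have yb: "-1 \<le> y" "y \<le> 1" using abs_square_le_1 by (auto simp: abs_le_iff)
  have cy: "cos (arccos y) = y" using yb by simp
  have sy: "sin (arccos y) = S / Q" using sin_arccos[OF yb] y2 S0 Q0 by simp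
  have c: "cos (2 * sph_angle w0 w1 w2) * ((m\<bullet>m)*(n\<bullet>n)) = C^2 - S^2"
    unfolding ang cos_double cy sy QP[symmetric] unfolding y_def using Q0 by (simp add: field_simps power_divide)
  have s: "sin (2 * sph_angle w0 w1 w2) * ((m\<bullet>m)*(n\<bullet>n)) = -2*C*S"
    unfolding ang sin_double cy sy QP[symmetric] unfolding y_def using Q0 by (simp add: field_simps power2_eq_square)
  show ?thesis unfolding m_def[symmetric] n_def[symmetric]
    by (rule refl_pair_rot[OF mw nw u0 m0 n0, symmetric]) (use c s in \<open>simp_all add: C_def S_def\<close>)
qed




lemma vtriple1: "cross3 (cross3 a b) c = (a \<bullet> c) *\<^sub>R b - (b \<bullet> c) *\<^sub>R a"
  by (simp add: vec_eq_iff forall_3 cc inner3 algebra_simps)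
lemma vtriple2: "cross3 a (cross3 b c) = (a \<bullet> c) *\<^sub>R b - (a \<bullet> b) *\<^sub>R c"
  by (simp add: vec_eq_iff forall_3 cc inner3 algebra_simps)

lemma refl3_scale:
  assumes k: "k \<noteq> 0" shows "refl3 (k *\<^sub>R n) = refl3 n"
proof (rule ext)
  fix v
  have "(2 * ((k *\<^sub>R n) \<bullet> v) / ((k *\<^sub>R n) \<bullet> (k *\<^sub>R n))) * k = 2 * (n \<bullet> v) / (n \<bullet> n)"
  proof (cases "n \<bullet> n = 0")
    case True then show ?thesis by simp
  next
    case False then show ?thesis using k by (simp add: divide_simps)
  qed
  then show "refl3 (k *\<^sub>R n) v = refl3 n v" unfolding refl3_def by (metis scaleR_scaleR)
qed

lemma sig_scale: "k \<noteq> 0 \<Longrightarrow> sig (k *\<^sub>R n) = sig n"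
  unfolding sig_def by (simp add: refl3_scale)

lemma refl3_invol:
  assumes "n \<noteq> 0" shows "refl3 n (refl3 n v) = v"
proof -
  define a where "a = 2 * (n \<bullet> v) / (n \<bullet> n)"
  have nn: "n \<bullet> n \<noteq> 0" using assms by simp
  have r: "refl3 n v = v - a *\<^sub>R n" unfolding refl3_def a_def ..
  have "n \<bullet> (v - a *\<^sub>R n) = - (n \<bullet> v)" unfolding a_def using nn by (simp add: inner_diff_right)
  then have "2 * (n \<bullet> (v - a *\<^sub>R n)) / (n \<bullet> n) = - a" unfolding a_def by simp
  then show ?thesis unfolding r by (simp add: refl3_def)
qed

lemma sig_invol: "n \<noteq> 0 \<Longrightarrow> sig n ** sig n = mat 1"
  by (simp add: matrix_eq matrix_vector_mul_assoc[symmetric] sig_apply refl3_invol)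

lemma left_inv_unique:
  fixes X Y M :: "real^3^3"
  assumes "X ** M = mat 1" "Y ** M = mat 1" shows "X = Y"
proof -
  have "M ** X = mat 1" using assms(1) matrix_left_right_inverse by blast
  then have "Y = (Y ** M) ** X" by (metis matrix_mul_assoc matrix_mul_rid)
  then show ?thesis using assms(2) by simp
qed

lemma RLA:
  fixes w p :: "real^3"
  assumes w: "w \<bullet> w = 1" and pw: "p \<bullet> w = 0" and p0: "p \<noteq> 0" and cs: "c^2 + s^2 = 1"
    and ct: "cos \<theta> = c^2 - s^2" and st: "sin \<theta> = -2 * c * s"
  shows "sig p ** sig (c *\<^sub>R p + s *\<^sub>R cross3 w p) = rot w \<theta>"
proof -
  define q where "q = c *\<^sub>R p + s *\<^sub>R cross3 w p"
  have x1: "cross3 w p \<bullet> w = 0" "cross3 w p \<bullet> p = 0" by (simp_all add: inner3 cc algebra_simps)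
  have x2: "cross3 w p \<bullet> cross3 w p = p \<bullet> p"
    using dot_cross[of w p w p] w pw by (simp add: inner_commute)
  have x3: "cross3 p (cross3 w p) \<bullet> w = p \<bullet> p"
    using w pw by (simp add: vtriple2 inner_diff_left inner_commute)
  have qw: "q \<bullet> w = 0" unfolding q_def using pw x1 by (simp add: inner_add_left)
  have pq: "p \<bullet> q = c * (p \<bullet> p)" unfolding q_def using x1 by (simp add: inner_add_right inner_commute)
  have "q \<bullet> q = (c^2 + s^2) * (p \<bullet> p)" unfolding q_def using x1 x2
    by (simp add: inner_add_right inner_add_left inner_commute power2_eq_square algebra_simps)
  then have qq: "q \<bullet> q = p \<bullet> p" using cs by simp
  have S: "cross3 p q \<bullet> w = s * (p \<bullet> p)" unfolding q_def
    by (simp add: cross_add_right cross_mult_right inner_add_left x3)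
  have q0: "q \<noteq> 0" using qq p0 by auto
  have "sig p ** sig q = rot w \<theta>"
    apply (rule refl_pair_rot[OF pw qw w p0 q0])
    unfolding ct st pq qq S by (simp_all add: algebra_simps power2_eq_square)
  then show ?thesis unfolding q_def .
qed

lemma RLB:
  fixes w p :: "real^3"
  assumes w: "w \<bullet> w = 1" and pw: "p \<bullet> w = 0" and p0: "p \<noteq> 0" and cs: "c^2 + s^2 = 1"
    and ct: "cos \<theta> = c^2 - s^2" and st: "sin \<theta> = 2 * c * s"
  shows "sig (c *\<^sub>R p + s *\<^sub>R cross3 w p) ** sig p = rot w \<theta>"
proof -
  define q where "q = c *\<^sub>R p + s *\<^sub>R cross3 w p"
  have x1: "cross3 w p \<bullet> w = 0" "cross3 w p \<bullet> p = 0" by (simp_all add: inner3 cc algebra_simps)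
  have x2: "cross3 w p \<bullet> cross3 w p = p \<bullet> p"
    using dot_cross[of w p w p] w pw by (simp add: inner_commute)
  have x3: "cross3 (cross3 w p) p \<bullet> w = - (p \<bullet> p)"
    using w pw by (simp add: vtriple1 inner_diff_left inner_commute)
  have qw: "q \<bullet> w = 0" unfolding q_def using pw x1 by (simp add: inner_add_left)
  have pq: "q \<bullet> p = c * (p \<bullet> p)" unfolding q_def using x1 by (simp add: inner_add_left)
  have "q \<bullet> q = (c^2 + s^2) * (p \<bullet> p)" unfolding q_def using x1 x2
    by (simp add: inner_add_right inner_add_left inner_commute power2_eq_square algebra_simps)
  then have qq: "q \<bullet> q = p \<bullet> p" using cs by simp
  have S: "cross3 q p \<bullet> w = - s * (p \<bullet> p)" unfolding q_def
    by (simp add: cross_add_left cross_mult_left inner_add_left x3)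
  have q0: "q \<noteq> 0" using qq p0 by auto
  have "sig q ** sig p = rot w \<theta>"
    apply (rule refl_pair_rot[OF qw pw w q0 p0])
    unfolding ct st pq qq S by (simp_all add: algebra_simps power2_eq_square)
  then show ?thesis unfolding q_def .
qed




lemma key_triple:
  fixes a b :: "real^3"
  defines "p \<equiv> cross3 a b"
  shows "p \<bullet> cross3 (cross3 a p) (cross3 b p) = (p \<bullet> p)^2"
proof -
  have "cross3 (cross3 a p) (cross3 b p) = (cross3 a p \<bullet> p) *\<^sub>R b - (cross3 a p \<bullet> b) *\<^sub>R p"
    by (rule vtriple2)
  moreover have "cross3 a p \<bullet> p = 0" by (simp add: inner3 cc algebra_simps)
  moreover have "cross3 a p \<bullet> b = - (p \<bullet> p)"
  proof -
    have "cross3 a p = (a \<bullet> b) *\<^sub>R a - (a \<bullet> a) *\<^sub>R b" unfolding p_def by (rule vtriple2)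
    moreover have "p \<bullet> p = (a \<bullet> a) * (b \<bullet> b) - (a \<bullet> b) * (b \<bullet> a)" unfolding p_def by (rule dot_cross)
    ultimately show ?thesis by (simp add: inner_diff_left inner_diff_right inner_commute power2_eq_square)
  qed
  ultimately show ?thesis by (simp add: power2_eq_square)
qed

lemma cw_cyc: "cw_sph_triangle w0 w1 w2 \<Longrightarrow> cw_sph_triangle w1 w2 w0"
  unfolding cw_sph_triangle_def using triple_cyc[of w0 w1 w2] by simp

lemma inv_tri:
  fixes w0 w1 :: "real^3" and \<phi> \<psi> :: real and c :: mat3
  assumes n0: "norm w0 = 1" and n1: "norm w1 = 1" and p0: "cross3 w0 w1 \<noteq> 0"
    and sa: "sin (\<phi>/2) \<noteq> 0" and sb: "sin (\<psi>/2) \<noteq> 0"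
    and H: "(rot w0 \<phi>, rot w1 \<psi>, c) \<in> Hom_P"
  shows "triangular_rep (rot w0 \<phi>, rot w1 \<psi>, c)"
proof -
  define p where "p = cross3 w0 w1"
  define q where "q = cos (\<phi>/2) *\<^sub>R p + (- sin (\<phi>/2)) *\<^sub>R cross3 w0 p"
  define r where "r = cos (\<psi>/2) *\<^sub>R p + sin (\<psi>/2) *\<^sub>R cross3 w1 p"
  have u0: "w0 \<bullet> w0 = 1" and u1: "w1 \<bullet> w1 = 1" using n0 n1 by (simp_all add: unit_inner)
  have pw0: "p \<bullet> w0 = 0" and pw1: "p \<bullet> w1 = 0" unfolding p_def by (simp_all add: inner3 cc algebra_simps)
  have pp0: "p \<noteq> 0" using p0 p_def by simp
  have cphi: "cos \<phi> = (cos (\<phi>/2))^2 - (- sin (\<phi>/2))^2" using cos_double[of "\<phi>/2"] by simp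
  have sphi: "sin \<phi> = -2 * cos (\<phi>/2) * (- sin (\<phi>/2))" using sin_double[of "\<phi>/2"] by simp
  have cpsi: "cos \<psi> = (cos (\<psi>/2))^2 - (sin (\<psi>/2))^2" using cos_double[of "\<psi>/2"] by simp
  have spsi: "sin \<psi> = 2 * cos (\<psi>/2) * sin (\<psi>/2)" using sin_double[of "\<psi>/2"] by simp
  have A: "sig p ** sig q = rot w0 \<phi>" unfolding q_def
    by (rule RLA[OF u0 pw0 pp0 _ cphi sphi]) simp
  have B: "sig r ** sig p = rot w1 \<psi>" unfolding r_def
    by (rule RLB[OF u1 pw1 pp0 _ cpsi spsi]) simp
  define z where "z = cross3 q r"
  have x0: "p \<bullet> cross3 p y = 0" "p \<bullet> cross3 y p = 0" for y by (simp_all add: inner3 cc algebra_simps)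
  have pz: "p \<bullet> z = (- sin (\<phi>/2)) * sin (\<psi>/2) * (p \<bullet> p)^2"
    unfolding z_def q_def r_def p_def[symmetric]
    using key_triple[of w0 w1, folded p_def] x0
    by (simp add: cross_add_left cross_add_right cross_mult_left cross_mult_right inner_add_right
      Cross3.left_diff_distrib Cross3.right_diff_distrib inner_diff_right)
  have pzn: "p \<bullet> z \<noteq> 0" unfolding pz using sa sb pp0 by simp
  then have z0: "z \<noteq> 0" by auto
  define \<epsilon> where "\<epsilon> = (if p \<bullet> z > 0 then -1 else 1) / norm z"
  define w2 where "w2 = \<epsilon> *\<^sub>R z"
  have e0: "\<epsilon> \<noteq> 0" unfolding \<epsilon>_def using z0 by simp
  have D: "w0 \<bullet> cross3 w1 w2 = \<epsilon> * (p \<bullet> z)" unfolding w2_def p_def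
    by (simp add: triple_swap cross_mult_right)
  have Dn: "w0 \<bullet> cross3 w1 w2 < 0" unfolding D \<epsilon>_def using pzn z0
    by (auto simp: divide_simps)
  have nw2: "norm w2 = 1" unfolding w2_def \<epsilon>_def using z0 by simp
  have T: "cw_sph_triangle w0 w1 w2" unfolding cw_sph_triangle_def using n0 n1 nw2 Dn by simp
  have T1: "cw_sph_triangle w1 w2 w0" by (rule cw_cyc[OF T])
  have T2: "cw_sph_triangle w2 w0 w1" by (rule cw_cyc[OF T1])
  have "cross3 w0 p \<bullet> w0 = 0" "w1 \<bullet> cross3 w1 p = 0" by (simp_all add: inner3 cc algebra_simps)
  then have qw0: "q \<bullet> w0 = 0" and rw1: "w1 \<bullet> r = 0" unfolding q_def r_def using pw0 pw1
    by (simp_all add: inner_add_left inner_add_right inner_diff_left inner_diff_right inner_commute)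
  have e1: "cross3 w2 w0 = (\<epsilon> * - (r \<bullet> w0)) *\<^sub>R q"
    unfolding w2_def z_def by (simp add: cross_mult_left vtriple1 qw0)
  have "cross3 w2 w0 \<bullet> w1 = w0 \<bullet> cross3 w1 w2" using triple_cyc[of w0 w1 w2] triple_swap[of w2 w0 w1]
    by (simp add: triple_cyc)
  then have "cross3 w2 w0 \<noteq> 0" using Dn by auto
  then have k1: "\<epsilon> * - (r \<bullet> w0) \<noteq> 0" using e1 by auto
  have S1: "sig (cross3 w2 w0) = sig q" unfolding e1 using sig_scale[OF k1] .
  have e2: "cross3 w1 w2 = (\<epsilon> * - (w1 \<bullet> q)) *\<^sub>R r"
    unfolding w2_def z_def by (simp add: cross_mult_right vtriple2 rw1)
  have "cross3 w1 w2 \<bullet> w0 = w0 \<bullet> cross3 w1 w2" by (simp add: inner_commute)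
  then have "cross3 w1 w2 \<noteq> 0" using Dn by auto
  then have k2: "\<epsilon> * - (w1 \<bullet> q) \<noteq> 0" using e2 by auto
  have S2: "sig (cross3 w1 w2) = sig r" unfolding e2 using sig_scale[OF k2] .
  have q0: "q \<noteq> 0" using k1 e1 \<open>cross3 w2 w0 \<noteq> 0\<close> by auto
  have r0: "r \<noteq> 0" using k2 e2 \<open>cross3 w1 w2 \<noteq> 0\<close> by auto
  have R0: "rot w0 (2 * sph_angle w0 w1 w2) = rot w0 \<phi>"
    using vertex[OF T] S1 A p_def by simp
  have R1: "rot w1 (2 * sph_angle w1 w2 w0) = rot w1 \<psi>"
    using vertex[OF T1] S2 B p_def by simp
  have R2: "rot w2 (2 * sph_angle w2 w0 w1) = sig q ** sig r"
    using vertex[OF T2] S1 S2 by simp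
  have "(sig q ** sig r) ** (rot w1 \<psi> ** rot w0 \<phi>) = mat 1"
  proof -
    have "(sig q ** sig r) ** (rot w1 \<psi> ** rot w0 \<phi>) = sig q ** (sig r ** sig r) ** (sig p ** sig p) ** sig q"
      unfolding A[symmetric] B[symmetric] by (simp add: matrix_mul_assoc)
    also have "\<dots> = mat 1" using sig_invol[OF q0] sig_invol[OF r0] sig_invol[OF pp0] by simp
    finally show ?thesis .
  qed
  moreover have "c ** (rot w1 \<psi> ** rot w0 \<phi>) = mat 1" using H unfolding Hom_P_def
    by (simp add: matrix_mul_assoc)
  ultimately have "c = sig q ** sig r" using left_inv_unique by blast
  then have "(rot w0 \<phi>, rot w1 \<psi>, c) = (rot w0 (2 * sph_angle w0 w1 w2),
             rot w1 (2 * sph_angle w1 w2 w0), rot w2 (2 * sph_angle w2 w0 w1))"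
    using R0 R1 R2 by simp
  then show ?thesis unfolding triangular_rep_def using H T by blast
qed




lemma rotf_comp:
  "rotf w \<theta> v $ 1 = cos \<theta> * v$1 + sin \<theta> * (w$2 * v$3 - v$2 * w$3) + (1 - cos \<theta>) * (w$1* v$1 + w$2* v$2 + w$3* v$3) * w$1"
  "rotf w \<theta> v $ 2 = cos \<theta> * v$2 + sin \<theta> * (w$3 * v$1 - v$3 * w$1) + (1 - cos \<theta>) * (w$1* v$1 + w$2* v$2 + w$3* v$3) * w$2"
  "rotf w \<theta> v $ 3 = cos \<theta> * v$3 + sin \<theta> * (w$1 * v$2 - v$1 * w$2) + (1 - cos \<theta>) * (w$1* v$1 + w$2* v$2 + w$3* v$3) * w$3"
  unfolding rotf_def by (simp_all add: cc inner3)

lemma rot_fix: "norm w = 1 \<Longrightarrow> rot w \<theta> *v w = w"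
  using unit_inner[of w] by (simp add: rot_apply rotf_def algebra_simps)

lemma rot_zero: "norm w = 1 \<Longrightarrow> rot w 0 = mat 1"
  by (simp add: matrix_eq rot_apply rotf_def)

lemma rot_neg_axis: "rot (- w) \<theta> = rot w (- \<theta>)"
  by (simp add: matrix_eq rot_apply rotf_def)

lemma rot_cong: "cos \<theta> = cos \<theta>' \<Longrightarrow> sin \<theta> = sin \<theta>' \<Longrightarrow> rot w \<theta> = rot w \<theta>'"
  by (simp add: rot_def)

lemma rot_FIX:
  assumes "rot w \<theta> *v x = x" "cos \<theta> \<noteq> 1" "norm w = 1"
  shows "cross3 w x = 0"
proof -
  have id: "(rotf w \<theta> x - x) \<bullet> x = (1 - cos \<theta>) * ((w \<bullet> x)^2 - x \<bullet> x)"
    unfolding rotf_def by (simp add: inner_add_left inner_diff_left dot_cross_self algebra_simps power2_eq_square)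
  have "rotf w \<theta> x - x = 0" using assms(1) by (simp add: rot_apply)
  then have "(w \<bullet> x)^2 = x \<bullet> x" using id assms(2) by simp
  moreover have "(norm (cross3 w x))^2 = (norm w)^2 * (norm x)^2 - (w \<bullet> x)^2" by (rule norm_cross)
  ultimately have "(norm (cross3 w x))^2 = 0" using assms(3) by (simp add: dot_square_norm)
  then show ?thesis by simp
qed

lemma rot_norm:
  assumes "norm w = 1" shows "norm (rotf w \<theta> v) = norm v"
proof -
  have u: "w$1*w$1 + w$2*w$2 + w$3*w$3 = 1" using unit_inner[OF assms] by (simp add: inner3)
  have cs: "cos \<theta> * cos \<theta> + sin \<theta> * sin \<theta> = 1" by (simp add: power2_eq_square[symmetric])
  have "rotf w \<theta> v \<bullet> rotf w \<theta> v = v \<bullet> v"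
    unfolding inner3 rotf_comp using u cs by algebra
  then show ?thesis by (simp add: norm_eq_sqrt_inner)
qed

lemma rot_orth: "norm w = 1 \<Longrightarrow> orthogonal_matrix (rot w \<theta>)"
proof -
  assume a: "norm w = 1"
  have "orthogonal_transformation (rotf w \<theta>)"
    unfolding orthogonal_transformation using linear_rotf rot_norm[OF a] by blast
  then have "orthogonal_matrix (matrix (rotf w \<theta>))" using orthogonal_transformation_matrix by blast
  moreover have "rot w \<theta> = matrix (rotf w \<theta>)" unfolding rot_def rotf_def by simp
  ultimately show ?thesis by simp
qed

lemma rot_entry: "rot w \<theta> $ i $ j = rotf w \<theta> (axis j 1) $ i"
  unfolding rot_def rotf_def matrix_def by simp

lemma rot_det: assumes "norm w = 1" shows "det (rot w \<theta>) = 1"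
proof -
  have u: "w$1*w$1 + w$2*w$2 + w$3*w$3 = 1" using unit_inner[OF assms] by (simp add: inner3)
  have cs: "cos \<theta> * cos \<theta> + sin \<theta> * sin \<theta> = 1" by (simp add: power2_eq_square[symmetric])
  show ?thesis unfolding det_3 rot_entry rotf_comp apply (simp add: axis_def) using u cs by algebra
qed

lemma rot_SO3: "norm w = 1 \<Longrightarrow> rot w \<theta> \<in> SO3"
  unfolding SO3_def using rot_orth rot_det by blast

lemma rotf_rotf:
  assumes "norm w = 1"
  shows "rotf w a (rotf w b v) = (cos a * cos b - sin a * sin b) *\<^sub>R v
     + (sin a * cos b + cos a * sin b) *\<^sub>R cross3 w v
     + ((w \<bullet> v) * (cos b * (1 - cos a) + sin a * sin b + (1 - cos b))) *\<^sub>R w"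
proof -
  have u: "w \<bullet> w = 1" using unit_inner[OF assms] .
  have L: "linear (rotf w a)" by (rule linear_rotf)
  have e1: "rotf w b v = cos b *\<^sub>R v + sin b *\<^sub>R cross3 w v + ((1 - cos b) * (w \<bullet> v)) *\<^sub>R w"
    unfolding rotf_def ..
  have e2: "rotf w a (cross3 w v) = cos a *\<^sub>R cross3 w v + sin a *\<^sub>R ((w \<bullet> v) *\<^sub>R w - v)"
    unfolding rotf_def using u by (simp add: vtriple2 dot_cross_self)
  have e3: "rotf w a w = w" unfolding rotf_def using u by (simp add: algebra_simps)
  have e4: "rotf w a v = cos a *\<^sub>R v + sin a *\<^sub>R cross3 w v + ((1 - cos a) * (w \<bullet> v)) *\<^sub>R w"
    unfolding rotf_def ..
  show ?thesis
    unfolding e1 linear_add[OF L] linear_scale[OF L] e2 e3 e4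
    by (simp add: algebra_simps)
qed

lemma rot_comm:
  assumes "norm w = 1" shows "rot w \<alpha> ** rot w \<beta> = rot w \<beta> ** rot w \<alpha>"
proof -
  have "rotf w \<alpha> (rotf w \<beta> v) = rotf w \<beta> (rotf w \<alpha> v)" for v
    unfolding rotf_rotf[OF assms] by (simp add: algebra_simps)
  then show ?thesis by (simp add: matrix_eq matrix_vector_mul_assoc[symmetric] rot_apply)
qed

lemma NC:
  assumes w: "norm w = 1" and v: "norm v = 1" and wv: "cross3 w v \<noteq> 0"
    and c: "cos \<phi> \<noteq> 1" and s: "sin \<psi> \<noteq> 0"
  shows "rot w \<phi> ** rot v \<psi> \<noteq> rot v \<psi> ** rot w \<phi>"
proof
  assume E: "rot w \<phi> ** rot v \<psi> = rot v \<psi> ** rot w \<phi>"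
  define y where "y = rot v \<psi> *v w"
  have "rot w \<phi> *v y = rot v \<psi> *v (rot w \<phi> *v w)"
    unfolding y_def by (metis E matrix_vector_mul_assoc)
  then have "rot w \<phi> *v y = y" unfolding y_def using rot_fix[OF w] by simp
  then have "cross3 w y = 0" using rot_FIX c w by blast
  moreover have "cross3 w (rotf v \<psi> w) \<bullet> v = sin \<psi> * (cross3 v w \<bullet> cross3 v w)"
    unfolding inner3 cc rotf_comp by algebra
  ultimately have "sin \<psi> * (cross3 v w \<bullet> cross3 v w) = 0" unfolding y_def rot_apply by simp
  moreover have "cross3 v w \<noteq> 0" using wv by (metis cross_skew neg_equal_0_iff_equal)
  ultimately show False using s by simp
qed




lemma SO3_D: "M \<in> SO3 \<Longrightarrow> transpose M ** M = mat 1 \<and> M ** transpose M = mat 1 \<and> det M = 1"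
  unfolding SO3_def orthogonal_matrix_def by auto

lemma mat1_entries: "(mat 1 :: real^3^3) $ i $ j = (if i = j then 1 else 0)"
  by (simp add: mat_def)
lemma det_neg3: "det (mat 1 - M) = - det (M - mat 1 :: real^3^3)"
  unfolding det_3 by (simp add: mat1_entries algebra_simps)

lemma SO3_fix:
  assumes M: "M \<in> SO3" shows "\<exists>w. norm w = 1 \<and> M *v w = w"
proof -
  have o1: "transpose M ** M = mat 1" and o2: "M ** transpose M = mat 1" and d: "det M = 1"
    using SO3_D[OF M] by auto
  have e: "M - mat 1 = M ** (mat 1 - transpose M)"
  proof (subst matrix_eq, intro allI)
    fix x
    have "(M ** (mat 1 - transpose M)) *v x = M *v ((mat 1 - transpose M) *v x)"
      by (simp only: matrix_vector_mul_assoc)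
    also have "\<dots> = M *v x - (M ** transpose M) *v x"
      by (simp only: matrix_vector_mult_diff_rdistrib matrix_vector_mult_diff_distrib
          matrix_vector_mul_lid matrix_vector_mul_assoc)
    also have "\<dots> = (M - mat 1) *v x" by (simp add: o2 matrix_vector_mult_diff_rdistrib)
    finally show "(M - mat 1) *v x = (M ** (mat 1 - transpose M)) *v x" by simp
  qed
  have "det (M - mat 1) = det (mat 1 - transpose M)" unfolding e det_mul d by simp
  also have "\<dots> = det (transpose (mat 1 - M))"
  proof -
    have "transpose (mat 1 - M) = mat 1 - transpose M"
      by (auto simp: vec_eq_iff transpose_def mat1_entries)
    then show ?thesis by simp
  qed
  also have "\<dots> = - det (M - mat 1)" by (simp add: det_neg3)
  finally have "det (M - mat 1) = 0" by simp
  then have "\<not> inj ((*v) (M - mat 1))"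
    using det_nz_iff_inj[of "(*v) (M - mat 1)"] by simp
  then obtain x y where xy: "x \<noteq> y" "(M - mat 1) *v x = (M - mat 1) *v y"
    unfolding inj_def by auto
  define z where "z = x - y"
  have z0: "z \<noteq> 0" using xy z_def by simp
  have Mz: "M *v z = z" using xy(2) unfolding z_def
    by (simp add: matrix_vector_mult_diff_rdistrib matrix_vector_mult_diff_distrib algebra_simps)
  define w where "w = (1 / norm z) *\<^sub>R z"
  have "norm w = 1" unfolding w_def using z0 by simp
  moreover have "M *v w = w" unfolding w_def by (simp add: matrix_vector_mult_scaleR Mz)
  ultimately show ?thesis by blast
qed

lemma EQV:
  assumes A: "rotation_matrix A"
  shows "A ** rot x t ** transpose A = rot (A *v x) t"
proof -
  have o2: "A ** transpose A = mat 1" using A unfolding rotation_matrix_def orthogonal_matrix_def by auto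
  show ?thesis
  proof (subst matrix_eq, intro allI)
    fix v
    define u where "u = transpose A *v v"
    have Au: "A *v u = v" unfolding u_def by (metis matrix_vector_mul_assoc matrix_vector_mul_lid o2)
    have xu: "x \<bullet> u = (A *v x) \<bullet> v"
      unfolding u_def using dot_lmul_matrix[of x "transpose A" v] by simp
    have cr: "A *v cross3 x u = cross3 (A *v x) v"
      using cross_rotation_matrix[OF A, of x u] Au by simp
    have "(A ** rot x t ** transpose A) *v v = A *v (rotf x t u)"
      unfolding u_def by (simp only: matrix_vector_mul_assoc[symmetric] rot_apply)
    also have "\<dots> = rotf (A *v x) t v"
      unfolding rotf_def by (simp add: matrix_vector_right_distrib matrix_vector_mult_scaleR Au xu cr)
    finally show "(A ** rot x t ** transpose A) *v v = rot (A *v x) t *v v" by (simp add: rot_apply)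
  qed
qed

lemma entry_basis: "(A *v axis j 1) $ i = (A :: real^3^3) $ i $ j"
  by (simp add: matrix_vector_mult_basis column_def)

lemma fix_e3_rot:
  assumes M: "M \<in> SO3" and f: "M *v axis 3 1 = axis 3 1"
  shows "\<exists>t. M = rot (axis 3 1) t"
proof -
  have o1: "transpose M ** M = mat 1" and o2: "M ** transpose M = mat 1" and d: "det M = 1"
    using SO3_D[OF M] by auto
  have c: "M $ i $ 3 = (axis 3 1 :: real^3) $ i" for i using entry_basis[of M 3 i] f by simp
  have c3: "M$1$3 = 0" "M$2$3 = 0" "M$3$3 = 1"
    using c[of 1] c[of 2] c[of 3] by (simp_all add: axis_def)
  have r33: "M$3$1 * M$3$1 + M$3$2 * M$3$2 + M$3$3 * M$3$3 = 1"
    using arg_cong[OF o2, of "\<lambda>X. X$3$3"] by (simp add: matrix_matrix_mult_def sum_3 transpose_def mat_def)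
  then have "M$3$1 * M$3$1 + M$3$2 * M$3$2 = 0" using c3 by simp
  then have r3: "M$3$1 = 0" "M$3$2 = 0" using sum_squares_eq_zero_iff by blast+
  have k11: "M$1$1 * M$1$1 + M$2$1 * M$2$1 + M$3$1 * M$3$1 = 1"
    using arg_cong[OF o1, of "\<lambda>X. X$1$1"] by (simp add: matrix_matrix_mult_def sum_3 transpose_def mat_def)
  have k12: "M$1$1 * M$1$2 + M$2$1 * M$2$2 + M$3$1 * M$3$2 = 0"
    using arg_cong[OF o1, of "\<lambda>X. X$1$2"] by (simp add: matrix_matrix_mult_def sum_3 transpose_def mat_def)
  have dd: "M$1$1 * M$2$2 - M$1$2 * M$2$1 = 1"
    using d c3 r3 by (simp add: det_3)
  define a where "a = M$1$1"
  define b where "b = M$2$1"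
  have ab: "a^2 + b^2 = 1" using k11 r3 unfolding a_def b_def by (simp add: power2_eq_square)
  have g: "M$1$2 = - b" and h: "M$2$2 = a"
  proof -
    have "M$1$2 = M$1$2 * (a*a + b*b)" using ab by (simp add: power2_eq_square)
    also have "\<dots> = a * (a * M$1$2 + b * M$2$2) + b * (b * M$1$2 - a * M$2$2)" by (simp add: algebra_simps)
    also have "\<dots> = - b" using k12 dd r3 unfolding a_def b_def by (simp add: algebra_simps)
    finally show "M$1$2 = - b" .
    have "M$2$2 = M$2$2 * (a*a + b*b)" using ab by (simp add: power2_eq_square)
    also have "\<dots> = a * (a * M$2$2 - b * M$1$2) + b * (a * M$1$2 + b * M$2$2)" by (simp add: algebra_simps)
    also have "\<dots> = a" using k12 dd r3 unfolding a_def b_def by (simp add: algebra_simps)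
    finally show "M$2$2 = a" .
  qed
  obtain t where t: "a = cos t" "b = sin t" using sincos_total_2pi[OF ab] by blast
  have "M = rot (axis 3 1) t"
    unfolding vec_eq_iff forall_3 rot_entry rotf_comp
    using c3 r3 g h t unfolding a_def b_def by (simp add: axis_def)
  then show ?thesis ..
qed

lemma SO3_decomp:
  assumes M: "M \<in> SO3"
  shows "\<exists>w t. norm w = 1 \<and> 0 \<le> t \<and> t \<le> pi \<and> M = rot w t"
proof -
  obtain w where w: "norm w = 1" "M *v w = w" using SO3_fix[OF M] by blast
  obtain A where A: "rotation_matrix A" "A *v axis 3 1 = w"
    using rotation_matrix_exists_basis[of w 3] w(1) by auto
  have oA: "transpose A ** A = mat 1" "A ** transpose A = mat 1" "det A = 1"
    using A(1) unfolding rotation_matrix_def orthogonal_matrix_def by auto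
  have AAt: "A *v (transpose A *v y) = y" for y by (metis matrix_vector_mul_assoc matrix_vector_mul_lid oA(2))
  have AtA: "transpose A *v (A *v y) = y" for y by (metis matrix_vector_mul_assoc matrix_vector_mul_lid oA(1))
  define M' where "M' = transpose A ** M ** A"
  have oM: "orthogonal_matrix M" "det M = 1" using M unfolding SO3_def by auto
  have oAA: "orthogonal_matrix A" using A(1) unfolding rotation_matrix_def by auto
  have "orthogonal_matrix M'" unfolding M'_def
    by (intro orthogonal_matrix_mul oAA oM(1)) (simp add: oAA)
  moreover have "det M' = 1" unfolding M'_def det_mul det_transpose using oM(2) oA(3) by simp
  ultimately have M'S: "M' \<in> SO3" unfolding SO3_def by simp
  have "M' *v axis 3 1 = transpose A *v (M *v (A *v axis 3 1))"
    unfolding M'_def by (simp only: matrix_vector_mul_assoc[symmetric])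
  also have "\<dots> = axis 3 1" using A(2) w(2) AtA by metis
  finally have "M' *v axis 3 1 = axis 3 1" .
  then obtain t where t: "M' = rot (axis 3 1) t" using fix_e3_rot[OF M'S] by blast
  have "M = A ** M' ** transpose A"
  proof (subst matrix_eq, intro allI)
    fix y
    show "M *v y = (A ** M' ** transpose A) *v y"
      unfolding M'_def by (simp only: matrix_vector_mul_assoc[symmetric] AAt)
  qed
  also have "\<dots> = rot w t" unfolding t EQV[OF A(1)] A(2) ..
  finally have Mw: "M = rot w t" .
  show ?thesis
  proof (cases "0 \<le> sin t")
    case True
    obtain t' where "0 \<le> t'" "t' \<le> pi" "cos t = cos t'" "sin t = sin t'"
      using sincos_total_pi[OF True, of "cos t"] by auto
    then show ?thesis using Mw w(1) rot_cong[of t t' w] by metis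
  next
    case False
    then have "0 \<le> sin (-t)" by simp
    then obtain t' where t': "0 \<le> t'" "t' \<le> pi" "cos (-t) = cos t'" "sin (-t) = sin t'"
      using sincos_total_pi[of "sin (-t)" "cos (-t)"] by auto
    have "M = rot (- w) (- t)" using Mw rot_neg_axis[of w "-t"] by simp
    also have "\<dots> = rot (- w) t'" using rot_cong t' by blast
    finally show ?thesis using w(1) t' by (metis norm_minus_cancel)
  qed
qed




lemma cont_mm[continuous_intros]:
  fixes f g :: "'a::topological_space \<Rightarrow> real^3^3"
  assumes "continuous_on S f" "continuous_on S g"
  shows "continuous_on S (\<lambda>x. f x ** g x)"
  unfolding matrix_matrix_mult_def by (intro continuous_intros assms)

lemma cont_transpose[continuous_intros]:
  fixes f :: "'a::topological_space \<Rightarrow> real^3^3"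
  shows "continuous_on S f \<Longrightarrow> continuous_on S (\<lambda>x. transpose (f x))"
  unfolding transpose_def by (intro continuous_intros)

lemma cont_rot:
  fixes X :: "real \<Rightarrow> real^3" and Th :: "real \<Rightarrow> real"
  assumes X: "continuous_on S X" and Th: "continuous_on S Th"
  shows "continuous_on S (\<lambda>s. rot (X s) (Th s))"
proof -
  have e: "rot (X s) (Th s) = (\<chi> i j. (cos (Th s) *\<^sub>R axis j 1 + sin (Th s) *\<^sub>R cross3 (X s) (axis j 1)
      + ((1 - cos (Th s)) * (X s \<bullet> axis j 1)) *\<^sub>R X s) $ i)" for s
    by (simp add: vec_eq_iff rot_entry rotf_def)
  show ?thesis unfolding e
    by (intro continuous_intros continuous_on_cross X Th continuous_on_const)
qed

lemma SO3_mult: "a \<in> SO3 \<Longrightarrow> b \<in> SO3 \<Longrightarrow> a ** b \<in> SO3"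
  unfolding SO3_def by (simp add: orthogonal_matrix_mul det_mul)

lemma SO3_transpose: "a \<in> SO3 \<Longrightarrow> transpose a \<in> SO3"
  unfolding SO3_def by simp

lemma Hom_c: assumes "(a, b, c) \<in> Hom_P" shows "c = transpose (b ** a)"
proof -
  have S: "a \<in> SO3" "b \<in> SO3" and e: "c ** b ** a = mat 1" using assms unfolding Hom_P_def by auto
  have "c ** (b ** a) = mat 1" using e by (simp add: matrix_mul_assoc)
  moreover have "transpose (b ** a) ** (b ** a) = mat 1" using SO3_D[OF SO3_mult[OF S(2) S(1)]] by simp
  ultimately show ?thesis using left_inv_unique by blast
qed

definition Tset :: "(mat3 \<times> mat3 \<times> mat3) set" where
  "Tset = {h \<in> Hom_P. fst h ** fst (snd h) \<noteq> fst (snd h) ** fst h}"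

lemma collinear_units:
  assumes "norm w0 = 1" "norm w1 = 1" "cross3 w0 w1 = 0"
  shows "w1 = w0 \<or> w1 = - w0"
proof -
  have u0: "w0 \<bullet> w0 = 1" using unit_inner assms by blast
  have "cross3 w0 (cross3 w0 w1) = (w0 \<bullet> w1) *\<^sub>R w0 - (w0 \<bullet> w0) *\<^sub>R w1" by (rule vtriple2)
  then have e: "w1 = (w0 \<bullet> w1) *\<^sub>R w0" using assms(3) u0 by simp
  then have "norm w1 = \<bar>w0 \<bullet> w1\<bar> * norm w0" by (metis norm_scaleR)
  then have "\<bar>w0 \<bullet> w1\<bar> = 1" using assms by simp
  then have "w0 \<bullet> w1 = 1 \<or> w0 \<bullet> w1 = -1" by linarith
  then show ?thesis using e by (metis scaleR_minus1_left scaleR_one)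
qed

lemma half_sin: assumes "0 \<le> \<phi>" "\<phi> \<le> pi" "\<phi> \<noteq> 0" shows "sin (\<phi>/2) \<noteq> 0"
proof -
  have "0 < \<phi>/2" "\<phi>/2 < pi" using assms pi_gt_zero by linarith+
  then show ?thesis using sin_gt_zero by fastforce
qed

lemma tri_T:
  assumes h: "h \<in> Tset" shows "triangular_rep h"
proof -
  obtain a b c where hh: "h = (a, b, c)" by (cases h) auto
  have H: "(a, b, c) \<in> Hom_P" and nc: "a ** b \<noteq> b ** a" using h unfolding Tset_def hh by auto
  have aS: "a \<in> SO3" and bS: "b \<in> SO3" using H unfolding Hom_P_def by auto
  obtain w0 \<phi> where w0: "norm w0 = 1" "0 \<le> \<phi>" "\<phi> \<le> pi" "a = rot w0 \<phi>" using SO3_decomp[OF aS] by blast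
  obtain w1 \<psi> where w1: "norm w1 = 1" "0 \<le> \<psi>" "\<psi> \<le> pi" "b = rot w1 \<psi>" using SO3_decomp[OF bS] by blast
  have "\<phi> \<noteq> 0"
  proof
    assume "\<phi> = 0" then have "a = mat 1" using w0 rot_zero by simp
    then show False using nc by simp
  qed
  then have sa: "sin (\<phi>/2) \<noteq> 0" using half_sin w0 by blast
  have "\<psi> \<noteq> 0"
  proof
    assume "\<psi> = 0" then have "b = mat 1" using w1 rot_zero by simp
    then show False using nc by simp
  qed
  then have sb: "sin (\<psi>/2) \<noteq> 0" using half_sin w1 by blast
  have p0: "cross3 w0 w1 \<noteq> 0"
  proof
    assume "cross3 w0 w1 = 0"
    then have "w1 = w0 \<or> w1 = - w0" using collinear_units w0(1) w1(1) by blast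
    then have "b = rot w0 \<psi> \<or> b = rot w0 (- \<psi>)" using w1(4) rot_neg_axis by auto
    then have "a ** b = b ** a" using rot_comm[OF w0(1)] w0(4) by auto
    then show False using nc by simp
  qed
  show ?thesis unfolding hh w0(4) w1(4)
    by (rule inv_tri[OF w0(1) w1(1) p0 sa sb]) (use H w0(4) w1(4) in simp)
qed

lemma topspace_quot: "topspace (quotient_topology X q) = q ` topspace X"
proof
  have "openin (quotient_topology X q) (topspace (quotient_topology X q))" by simp
  then show "topspace (quotient_topology X q) \<subseteq> q ` topspace X"
    unfolding openin_quotient_topology by blast
  have "{x \<in> topspace X. q x \<in> q ` topspace X} = topspace X" by auto
  then have "openin (quotient_topology X q) (q ` topspace X)"
    unfolding openin_quotient_topology by simp
  then show "q ` topspace X \<subseteq> topspace (quotient_topology X q)" by (rule openin_subset)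
qed

lemma top_Hom: "topspace Hom_top = Hom_P" unfolding Hom_top_def by simp
lemma top_rep: "topspace rep_top = character ` Hom_P" unfolding rep_top_def topspace_quot top_Hom ..

lemma cont_char: "continuous_map Hom_top rep_top character"
  unfolding continuous_map rep_top_def topspace_quot openin_quotient_topology by auto

lemma inv_SO3: assumes "g \<in> SO3" shows "g ** matrix_inv g = mat 1 \<and> matrix_inv g ** g = mat 1"
  unfolding matrix_inv_def
  by (rule someI[of _ "transpose g"]) (use SO3_D[OF assms] in simp)

lemma mat1_SO3: "mat 1 \<in> SO3" unfolding SO3_def by (simp add: orthogonal_matrix_id)

lemma mem_char: "x \<in> character x"
proof -
  have "mat 1 ** matrix_inv (mat 1 :: mat3) = mat 1" using inv_SO3[OF mat1_SO3] by blast
  then have i: "matrix_inv (mat 1 :: mat3) = mat 1" by simp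
  have "conj_rep (mat 1) x = x" unfolding conj_rep_def i by (cases x) simp
  then show ?thesis unfolding character_def using mat1_SO3 by force
qed

lemma Tset_sat:
  assumes x: "x \<in> Hom_P" and c: "character x = character t" and t: "t \<in> Tset"
  shows "x \<in> Tset"
proof -
  have "x \<in> character t" using mem_char[of x] c by simp
  then obtain g where g: "g \<in> SO3" "x = conj_rep g t" unfolding character_def by blast
  define gi where "gi = matrix_inv g"
  have i1: "g ** gi = mat 1" and i2: "gi ** g = mat 1" using inv_SO3[OF g(1)] gi_def by auto
  have i3: "Z ** gi ** g = Z" and i4: "Z ** g ** gi = Z" for Z :: mat3
    using i1 i2 by (metis matrix_mul_assoc matrix_mul_rid)+
  obtain a b c where tt: "t = (a, b, c)" by (cases t) auto
  have nc: "a ** b \<noteq> b ** a" using t unfolding Tset_def tt by simp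
  have xx: "x = (g ** a ** gi, g ** b ** gi, g ** c ** gi)" using g(2) unfolding conj_rep_def tt gi_def by simp
  show ?thesis unfolding Tset_def
  proof (intro CollectI conjI x notI)
    assume E: "fst x ** fst (snd x) = fst (snd x) ** fst x"
    have "gi ** (fst x ** fst (snd x)) ** g = a ** b"
      unfolding xx by (simp add: matrix_mul_assoc i3 i2 i1 i4)
    moreover have "gi ** (fst (snd x) ** fst x) ** g = b ** a"
      unfolding xx by (simp add: matrix_mul_assoc i3 i2 i1 i4)
    ultimately show False using E nc by simp
  qed
qed

lemma Tset_open: "openin Hom_top Tset"
proof -
  have "open {h :: mat3 \<times> mat3 \<times> mat3. fst h ** fst (snd h) \<noteq> fst (snd h) ** fst h}"
    by (intro open_Collect_neq continuous_intros)
  moreover have "Tset = {h :: mat3 \<times> mat3 \<times> mat3. fst h ** fst (snd h) \<noteq> fst (snd h) ** fst h} \<inter> Hom_P"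
    unfolding Tset_def by auto
  ultimately show ?thesis unfolding Hom_top_def openin_subtopology by auto
qed




lemma perturb_dir:
  assumes "norm (w::real^3) = 1"
  shows "\<exists>u. \<forall>t>0. cross3 w (v + t *\<^sub>R u) \<noteq> 0"
proof (cases "cross3 w v = 0")
  case True
  have "w \<noteq> 0" using assms by auto
  then obtain k where k: "cross3 w (axis k 1) \<noteq> 0" using cross_basis_nonzero by blast
  show ?thesis
    by (rule exI[of _ "axis k 1"]) (use True k in \<open>simp add: cross_add_right cross_mult_right\<close>)
next
  case False
  show ?thesis
  proof (rule exI[of _ "cross3 w v"], intro allI impI notI)
    fix t :: real assume t: "t > 0" and E: "cross3 w (v + t *\<^sub>R cross3 w v) = 0"
    have "0 = cross3 w (v + t *\<^sub>R cross3 w v) \<bullet> cross3 w v" using E by simp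
    also have "\<dots> = cross3 w v \<bullet> cross3 w v"
      by (simp add: cross_add_right cross_mult_right inner_add_left dot_cross_self)
    finally show False using False by simp
  qed
qed

lemma path_to_T:
  assumes h: "h \<in> Hom_P"
  shows "\<exists>\<delta>::real \<Rightarrow> _. continuous_on {0..1} \<delta> \<and> \<delta> \<in> {0..1} \<rightarrow> Hom_P \<and> \<delta> 0 = h \<and> (\<forall>t\<in>{0<..1}. \<delta> t \<in> Tset)"
proof -
  obtain a b c where hh: "h = (a, b, c)" by (cases h) auto
  have H: "(a, b, c) \<in> Hom_P" using h hh by simp
  have aS: "a \<in> SO3" and bS: "b \<in> SO3" using H unfolding Hom_P_def by auto
  obtain w \<phi> where w: "norm w = 1" "0 \<le> \<phi>" "\<phi> \<le> pi" "a = rot w \<phi>" using SO3_decomp[OF aS] by blast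
  obtain v \<psi> where v: "norm v = 1" "0 \<le> \<psi>" "\<psi> \<le> pi" "b = rot v \<psi>" using SO3_decomp[OF bS] by blast
  obtain u where u: "\<And>t. t > 0 \<Longrightarrow> cross3 w (v + t *\<^sub>R u) \<noteq> 0" using perturb_dir[OF w(1)] by blast
  define V where "V t = v + t *\<^sub>R u" for t :: real
  have V0: "V t \<noteq> 0" if "0 \<le> t" for t
  proof (cases "t = 0")
    case True then show ?thesis using v(1) V_def by auto
  next
    case False then have "t > 0" using that by simp
    then show ?thesis using u[of t] V_def by auto
  qed
  define vt where "vt t = (1 / norm (V t)) *\<^sub>R V t" for t
  have nvt: "norm (vt t) = 1" if "0 \<le> t" for t using V0[OF that] vt_def by simp
  define ft where "ft t = (1 - t) * \<phi> + t * (pi/2)" for t :: real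
  define gt where "gt t = (1 - t) * \<psi> + t * (pi/2)" for t :: real
  define A where "A t = rot w (ft t)" for t
  define B where "B t = rot (vt t) (gt t)" for t
  define \<delta> where "\<delta> t = (A t, B t, transpose (B t ** A t))" for t
  have "continuous_on {0..1} vt" unfolding vt_def V_def
    by (intro continuous_intros) (use V0 V_def in auto)
  then have cB: "continuous_on {0..1} B" unfolding B_def gt_def
    by (intro cont_rot continuous_intros)
  have cA: "continuous_on {0..1} A" unfolding A_def ft_def
    by (intro cont_rot continuous_intros)
  have cont: "continuous_on {0..1} \<delta>" unfolding \<delta>_def
    by (intro continuous_intros cA cB)
  have AS: "A t \<in> SO3" for t unfolding A_def using rot_SO3 w(1) by blast
  have BS: "B t \<in> SO3" if "0 \<le> t" for t unfolding B_def using rot_SO3 nvt[OF that] by blast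
  have inH: "\<delta> t \<in> Hom_P" if "0 \<le> t" for t
  proof -
    have BA: "B t ** A t \<in> SO3" using SO3_mult BS[OF that] AS by blast
    have "transpose (B t ** A t) ** B t ** A t = mat 1"
      using SO3_D[OF BA] by (simp add: matrix_mul_assoc)
    then show ?thesis unfolding \<delta>_def Hom_P_def using AS BS[OF that] SO3_transpose[OF BA] by simp
  qed
  have vt0: "vt 0 = v" unfolding vt_def V_def using v(1) by simp
  have d0: "\<delta> 0 = h"
    unfolding \<delta>_def A_def B_def ft_def gt_def vt0 hh using w(4) v(4) Hom_c[OF H] by simp
  have inT: "\<delta> t \<in> Tset" if t: "0 < t" "t \<le> 1" for t
  proof -
    have f1: "0 < ft t" "ft t < pi"
    proof -
      have "(1-t)*\<phi> \<le> (1-t)*pi" using t w(3) by (intro mult_left_mono) auto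
      moreover have "0 \<le> (1-t)*\<phi>" using t w(2) by simp
      moreover have "0 < t*(pi/2)" using t by simp
      moreover have "(1-t)*pi = pi - 2 * (t*(pi/2))" by (simp add: algebra_simps)
      ultimately show "0 < ft t" "ft t < pi" unfolding ft_def by linarith+
    qed
    have g1: "0 < gt t" "gt t < pi"
    proof -
      have "(1-t)*\<psi> \<le> (1-t)*pi" using t v(3) by (intro mult_left_mono) auto
      moreover have "0 \<le> (1-t)*\<psi>" using t v(2) by simp
      moreover have "0 < t*(pi/2)" using t by simp
      moreover have "(1-t)*pi = pi - 2 * (t*(pi/2))" by (simp add: algebra_simps)
      ultimately show "0 < gt t" "gt t < pi" unfolding gt_def by linarith+
    qed
    have c1: "cos (ft t) \<noteq> 1" using cos_monotone_0_pi[of 0 "ft t"] f1 by simp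
    have s1: "sin (gt t) \<noteq> 0" using sin_gt_zero g1 by fastforce
    have "cross3 w (vt t) = (1 / norm (V t)) *\<^sub>R cross3 w (V t)" unfolding vt_def by (simp add: cross_mult_right)
    moreover have "cross3 w (V t) \<noteq> 0" using u t V_def by simp
    moreover have "norm (V t) \<noteq> 0" using V0 t by simp
    ultimately have cr: "cross3 w (vt t) \<noteq> 0" by simp
    have "A t ** B t \<noteq> B t ** A t" unfolding A_def B_def
      by (rule NC[OF w(1) nvt cr c1 s1]) (use t in simp)
    then show ?thesis unfolding Tset_def \<delta>_def using inH t by (simp add: \<delta>_def)
  qed
  show ?thesis
    by (rule exI[of _ \<delta>]) (use cont inH d0 inT in auto)
qed

theorem mainTheorem4:
  shows "(\<exists>U. openin rep_top U \<and> rep_top closure_of U = topspace rep_top \<and>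
              (\<forall>c\<in>U. triangular_char c))
       \<and> (\<forall>c\<in>topspace rep_top. \<exists>\<gamma>. pathin rep_top \<gamma> \<and> \<gamma> 0 = c \<and>
              (\<forall>t\<in>{0<..1}. triangular_char (\<gamma> t)))"
proof -
  define U where "U = character ` Tset"
  have TH: "Tset \<subseteq> Hom_P" unfolding Tset_def by auto
  have Utri: "\<forall>c\<in>U. triangular_char c" unfolding U_def triangular_char_def using tri_T by blast
  have pre: "{x \<in> topspace Hom_top. character x \<in> U} = Tset"
    unfolding top_Hom U_def using TH Tset_sat by auto
  have Uopen: "openin rep_top U"
    unfolding rep_top_def openin_quotient_topology
    using pre Tset_open TH unfolding U_def top_Hom by auto
  have paths: "\<exists>\<gamma>. pathin rep_top \<gamma> \<and> \<gamma> 0 = c \<and> (\<forall>t\<in>{0<..1}. \<gamma> t \<in> U)"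
    if c: "c \<in> topspace rep_top" for c
  proof -
    obtain h where h: "h \<in> Hom_P" "c = character h" using c unfolding top_rep by auto
    obtain \<delta> :: "real \<Rightarrow> _" where d: "continuous_on {0..1} \<delta>" "\<delta> \<in> {0..1} \<rightarrow> Hom_P" "\<delta> 0 = h"
        "\<forall>t\<in>{0<..1}. \<delta> t \<in> Tset" using path_to_T[OF h(1)] by blast
    have "continuous_map (top_of_set {0..1}) Hom_top \<delta>" unfolding Hom_top_def using d by simp
    then have "continuous_map (top_of_set {0..1}) rep_top (character \<circ> \<delta>)"
      using cont_char continuous_map_compose by blast
    then have "pathin rep_top (character \<circ> \<delta>)" unfolding pathin_def by simp
    moreover have "(character \<circ> \<delta>) 0 = c" using d h by simp
    moreover have "\<forall>t\<in>{0<..1}. (character \<circ> \<delta>) t \<in> U" using d unfolding U_def by auto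
    ultimately show ?thesis by blast
  qed
  have clos: "rep_top closure_of U = topspace rep_top"
  proof (rule antisym[OF closure_of_subset_topspace], rule subsetI)
    fix c assume c: "c \<in> topspace rep_top"
    obtain \<gamma> where g: "pathin rep_top \<gamma>" "\<gamma> 0 = c" "\<forall>t\<in>{0<..1}. \<gamma> t \<in> U" using paths[OF c] by blast
    show "c \<in> rep_top closure_of U" unfolding in_closure_of
    proof (intro conjI c allI impI)
      fix V assume V: "c \<in> V \<and> openin rep_top V"
      have "openin (top_of_set {0..1}) {x \<in> topspace (top_of_set {0..1}). \<gamma> x \<in> V}"
        using g(1) V unfolding pathin_def continuous_map by blast
      then have op: "openin (top_of_set {0..1}) {x \<in> {0..1}. \<gamma> x \<in> V}" by simp
      have "0 \<in> {x \<in> {0..1::real}. \<gamma> x \<in> V}" using g(2) V by simp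
      then obtain e where e: "e > 0" "\<forall>x'\<in>{0..1}. dist x' 0 < e \<longrightarrow> x' \<in> {x \<in> {0..1::real}. \<gamma> x \<in> V}"
        using op unfolding openin_euclidean_subtopology_iff by blast
      define t where "t = min (e/2) 1"
      have t: "0 < t" "t \<le> 1" "dist t 0 < e" unfolding t_def using e(1) by auto
      then have "\<gamma> t \<in> V" using e(2) by auto
      moreover have "\<gamma> t \<in> U" using g(3) t by auto
      ultimately show "\<exists>y. y \<in> U \<and> y \<in> V" by blast
    qed
  qed
  show ?thesis
  proof (intro conjI ballI)
    show "\<exists>U. openin rep_top U \<and> rep_top closure_of U = topspace rep_top \<and> (\<forall>c\<in>U. triangular_char c)"
      using Uopen clos Utri by blast
  next
    fix c assume "c \<in> topspace rep_top"
    then obtain \<gamma> where "pathin rep_top \<gamma>" "\<gamma> 0 = c" "\<forall>t\<in>{0<..1}. \<gamma> t \<in> U" using paths by blast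
    then show "\<exists>\<gamma>. pathin rep_top \<gamma> \<and> \<gamma> 0 = c \<and> (\<forall>t\<in>{0<..1}. triangular_char (\<gamma> t))"
      using Utri by blast
  qed
qed


end
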